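(* Let $X$ be a Banach space and $f_k:X\to\mathbb{R}\cup\{+\infty\}$ $(k\in\mathbb{N}\cup\{0\})$ proper convex functions such that $C:=\operatorname{dom}f_0\cap\{x: f_k(x)\le0\ \forall k\in\mathbb{N}\}\neq\emptyset$. Let $\bar x\in X$ be a solution of problem (P): minimize $f_0(x)$ subject to $f_k(x)\le 0$ $(k\in\mathbb{N})$, and suppose the Slater condition holds: there exists $x\in\operatorname{dom}f_0$ with $\sup_{k\in\mathbb{N}}f_k(x)<0$. Then: (i) There exists a solution $(\lambda_1,\lambda_2,\ldots)\in\ell^1_+$, $\lambda_\infty\in\mathbb{R}_+$ of (D), i.e., $f_0(\bar x)=\inf_{x\in X}\big(f_0(x)+\overline{\sum_{k\in\mathbb{N}}}\lambda_kf_k(x)+\lambda_\infty f_\infty(x)\big)$. Moreover, for any solution of (D), this infimum is attained at $\bar x$, and $\lambda_kf_k(\bar x)=0$ for all $k\in\mathbb{N}\cup\{\infty\}$. (ii) For any $m=0,1,\ldots$, there exists a solution $(\lambda_1,\lambda_2,\ldots)\in\ell^\infty_+$ of (D$_m$), i.e., $f_0(\bar x)=\inf_{x\in X}\big(f_0(x)+\sum_{k=1}^m\lambda_kf_k(x)+\sum_{k=m+1}^{\infty}\lambda_kf_k^+(x)\big)$. Moreover, for any solution of (D$_m$), this infimum is attained at $\bar x$, and $\lambda_kf_k(\bar x)=0$ for $k=1,\ldots,m$.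
   Context: Conventions: $0\cdot(+\infty)=+\infty$, $(+\infty)-(+\infty)=+\infty$. $\ell^1_+$, $\ell^\infty_+$: nonnegative sequences in $\ell^1$, $\ell^\infty$. $f_\infty(x):=\limsup_{k\to\infty}f_k(x)$, $f_k^+:=\max\{f_k,0\}$, and $\overline{\sum_{k\in\mathbb{N}}}\lambda_kf_k(x):=\limsup_{n\to\infty}\sum_{k=1}^n\lambda_kf_k(x)$. (D) is the problem $\sup_{\lambda\in\ell^1_+,\lambda_\infty\ge0}\inf_{x\in X}\big(f_0(x)+\overline{\sum_{k\in\mathbb{N}}}\lambda_kf_k(x)+\lambda_\infty f_\infty(x)\big)$; (D$_m$) is $\sup_{\lambda\in\ell^\infty_+}\inf_{x\in X}\big(f_0(x)+\sum_{k=1}^m\lambda_kf_k(x)+\sum_{k=m+1}^\infty\lambda_kf_k^+(x)\big)$ (first sum zero if $m=0$). A solution of a dual problem is a point attaining its supremum; a solution of (P) is a feasible point minimizing $f_0$ over the feasible set. *)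

theory Defs
  imports "HOL-Analysis.Analysis" "HOL-Library.Extended_Real" "HOL-Library.Liminf_Limsup"
begin

text \<open>Functions X -> R \<union> {+inf} are modelled as ereal-valued functions never equal to -inf.
  The family f :: nat => 'a => ereal has f 0 the objective and f k (k >= 1) the constraints.\<close>

definition edom :: "('a \<Rightarrow> ereal) \<Rightarrow> 'a set" where
  "edom g = {x. g x \<noteq> \<infinity>}"

definition proper_convex :: "('a::real_vector \<Rightarrow> ereal) \<Rightarrow> bool" where
  "proper_convex g \<longleftrightarrow> (\<forall>x. g x \<noteq> -\<infinity>) \<and> (\<exists>x. g x \<noteq> \<infinity>) \<and>
     (\<forall>x y t. 0 < t \<longrightarrow> t < 1 \<longrightarrow>
        g (t *\<^sub>R x + (1 - t) *\<^sub>R y) \<le> ereal t * g x + ereal (1 - t) * g y)"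

text \<open>Multiplication with the convention 0 * (+inf) = +inf.\<close>
definition emult :: "real \<Rightarrow> ereal \<Rightarrow> ereal" where
  "emult l v = (if l = 0 then (if v = \<infinity> then \<infinity> else 0) else ereal l * v)"

definition feasibleP :: "(nat \<Rightarrow> 'a \<Rightarrow> ereal) \<Rightarrow> 'a \<Rightarrow> bool" where
  "feasibleP f x \<longleftrightarrow> (\<forall>k\<ge>1. f k x \<le> 0)"

definition solutionP :: "(nat \<Rightarrow> 'a \<Rightarrow> ereal) \<Rightarrow> 'a \<Rightarrow> bool" where
  "solutionP f x \<longleftrightarrow> feasibleP f x \<and> (\<forall>y. feasibleP f y \<longrightarrow> f 0 x \<le> f 0 y)"

definition finf :: "(nat \<Rightarrow> 'a \<Rightarrow> ereal) \<Rightarrow> 'a \<Rightarrow> ereal" where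
  "finf f x = limsup (\<lambda>k. f k x)"

text \<open>Lagrangian of (D); addition with the ereal convention (+inf) + (-inf) = +inf.\<close>
definition LagD :: "(nat \<Rightarrow> 'a \<Rightarrow> ereal) \<Rightarrow> (nat \<Rightarrow> real) \<Rightarrow> real \<Rightarrow> 'a \<Rightarrow> ereal" where
  "LagD f lam lami x = f 0 x + limsup (\<lambda>n. \<Sum>k\<in>{1..n}. emult (lam k) (f k x))
      + emult lami (finf f x)"

definition dualD :: "(nat \<Rightarrow> 'a \<Rightarrow> ereal) \<Rightarrow> (nat \<Rightarrow> real) \<Rightarrow> real \<Rightarrow> ereal" where
  "dualD f lam lami = (INF x. LagD f lam lami x)"

definition admD :: "(nat \<Rightarrow> real) \<Rightarrow> real \<Rightarrow> bool" where
  "admD lam lami \<longleftrightarrow> (\<forall>k\<ge>1. 0 \<le> lam k) \<and> summable lam \<and> 0 \<le> lami"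

definition solutionD :: "(nat \<Rightarrow> 'a \<Rightarrow> ereal) \<Rightarrow> (nat \<Rightarrow> real) \<Rightarrow> real \<Rightarrow> bool" where
  "solutionD f lam lami \<longleftrightarrow> admD lam lami \<and>
     (\<forall>mu mui. admD mu mui \<longrightarrow> dualD f mu mui \<le> dualD f lam lami)"

definition LagDm :: "(nat \<Rightarrow> 'a \<Rightarrow> ereal) \<Rightarrow> nat \<Rightarrow> (nat \<Rightarrow> real) \<Rightarrow> 'a \<Rightarrow> ereal" where
  "LagDm f m lam x = f 0 x + (\<Sum>k\<in>{1..m}. emult (lam k) (f k x))
      + (\<Sum>k. if m < k then emult (lam k) (max (f k x) 0) else 0)"

definition dualDm :: "(nat \<Rightarrow> 'a \<Rightarrow> ereal) \<Rightarrow> nat \<Rightarrow> (nat \<Rightarrow> real) \<Rightarrow> ereal" where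
  "dualDm f m lam = (INF x. LagDm f m lam x)"

definition admDm :: "(nat \<Rightarrow> real) \<Rightarrow> bool" where
  "admDm lam \<longleftrightarrow> (\<forall>k\<ge>1. 0 \<le> lam k) \<and> (\<exists>B. \<forall>k\<ge>1. lam k \<le> B)"

definition solutionDm :: "(nat \<Rightarrow> 'a \<Rightarrow> ereal) \<Rightarrow> nat \<Rightarrow> (nat \<Rightarrow> real) \<Rightarrow> bool" where
  "solutionDm f m lam \<longleftrightarrow> admDm lam \<and>
     (\<forall>mu. admDm mu \<longrightarrow> dualDm f m mu \<le> dualDm f m lam)"

end

theory Submission
  imports Defs
begin



definition cvxe :: "('a::real_vector \<Rightarrow> ereal) \<Rightarrow> bool" where
  "cvxe g \<longleftrightarrow> (\<forall>x y t. 0 < t \<longrightarrow> t < 1 \<longrightarrow>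
        g (t *\<^sub>R x + (1 - t) *\<^sub>R y) \<le> ereal t * g x + ereal (1 - t) * g y)"

lemma key_ineq:
  fixes Fy Fz gy gz c :: real
  assumes "gy > 0" "gz < 0" "c * (gy - gz) \<le> - gz * Fy + gy * Fz"
  shows "(c - Fy) / gy \<le> (Fz - c) / (- gz)"
proof -
  have "(c - Fy) * (- gz) \<le> (Fz - c) * gy" using assms(3) by (simp add: algebra_simps)
  then show ?thesis using assms by (simp add: divide_simps) (simp add: algebra_simps)
qed

lemma one_constraint_key:
  fixes F g :: "'a::real_vector \<Rightarrow> ereal"
  assumes cF: "cvxe F" and cg: "cvxe g"
    and feas: "\<And>x. g x \<le> 0 \<Longrightarrow> ereal c \<le> F x"
    and y: "F y = ereal Fy" "g y = ereal gy" "gy > 0"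
    and z: "F z = ereal Fz" "g z = ereal gz" "gz < 0"
  shows "(c - Fy) / gy \<le> (Fz - c) / (- gz)"
proof -
  define t where "t = - gz / (gy - gz)"
  have t0: "0 < t" "t < 1" using y z by (auto simp: t_def divide_simps)
  have t1: "1 - t = gy / (gy - gz)" using y z by (simp add: t_def divide_simps)
  define w where "w = t *\<^sub>R y + (1 - t) *\<^sub>R z"
  have "g w \<le> ereal t * g y + ereal (1 - t) * g z"
    using cg t0 unfolding cvxe_def w_def by blast
  also have "\<dots> = ereal (t * gy + (1 - t) * gz)" using y z by simp
  also have "t * gy + (1 - t) * gz = 0" unfolding t1 t_def using y z by (simp add: divide_simps algebra_simps)
  finally have "ereal c \<le> F w" using feas by (simp add: zero_ereal_def)
  also have "F w \<le> ereal t * F y + ereal (1 - t) * F z"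
    using cF t0 unfolding cvxe_def w_def by blast
  also have "\<dots> = ereal (t * Fy + (1 - t) * Fz)" using y z by simp
  finally have "c \<le> t * Fy + (1 - t) * Fz" by simp
  then have "c * (gy - gz) \<le> (t * Fy + (1 - t) * Fz) * (gy - gz)" using y z by (simp add: mult_right_mono)
  also have "\<dots> = (t * (gy - gz)) * Fy + ((1 - t) * (gy - gz)) * Fz" by (simp add: algebra_simps)
  also have "t * (gy - gz) = - gz" unfolding t_def using y z by (simp add: divide_simps)
  also have "(1 - t) * (gy - gz) = gy" unfolding t1 using y z by (simp add: divide_simps)
  finally show ?thesis using key_ineq y z by blast
qed

lemma one_constraint:
  fixes F g :: "'a::real_vector \<Rightarrow> ereal"
  assumes cF: "cvxe F" and cg: "cvxe g"
    and Fm: "\<And>x. F x \<noteq> -\<infinity>" and gm: "\<And>x. g x \<noteq> -\<infinity>"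
    and x0: "F x0 \<noteq> \<infinity>" "g x0 < 0"
    and feas: "\<And>x. g x \<le> 0 \<Longrightarrow> ereal c \<le> F x"
  shows "\<exists>\<mu>\<ge>0. \<forall>x. ereal c \<le> F x + emult \<mu> (g x)"
proof -
  define D where "D = {x. F x \<noteq> \<infinity> \<and> g x \<noteq> \<infinity>}"
  define Fr where "Fr x = real_of_ereal (F x)" for x
  define gr where "gr x = real_of_ereal (g x)" for x
  have FD: "F x = ereal (Fr x)" "g x = ereal (gr x)" if "x \<in> D" for x
    using that Fm[of x] gm[of x] unfolding D_def Fr_def gr_def by (auto simp: ereal_real dest: ereal_infinity_cases)
  define Z where "Z = (\<lambda>z. (Fr z - c) / (- gr z)) ` {z\<in>D. gr z < 0}"
  have x0D: "x0 \<in> D" "gr x0 < 0" using x0 unfolding D_def gr_def using gm[of x0]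
    by (cases "g x0"; auto)+
  have Zne: "Z \<noteq> {}" using x0D unfolding Z_def by blast
  have Zpos: "0 \<le> v" if vZ: "v \<in> Z" for v
  proof -
    obtain z where z: "z \<in> D" "gr z < 0" "v = (Fr z - c) / (- gr z)" using vZ unfolding Z_def by blast
    have "g z \<le> 0" using FD[OF z(1)] z(2) by (simp add: zero_ereal_def)
    then have "c \<le> Fr z" using feas[of z] FD[OF z(1)] by simp
    then show ?thesis using z by (simp add: divide_nonneg_neg)
  qed
  have bdd: "bdd_below Z" using Zpos by (rule bdd_belowI)
  define \<mu> where "\<mu> = Inf Z"
  have mu0: "0 \<le> \<mu>" unfolding \<mu>_def using Zne Zpos by (intro cInf_greatest) auto
  have mule: "\<mu> \<le> (Fr z - c) / (- gr z)" if "z \<in> D" "gr z < 0" for z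
    unfolding \<mu>_def using bdd that unfolding Z_def by (intro cInf_lower) auto
  have muge: "(c - Fr y) / gr y \<le> \<mu>" if "y \<in> D" "gr y > 0" for y
    unfolding \<mu>_def using Zne
  proof (intro cInf_greatest)
    fix v assume "v \<in> Z"
    then obtain z where z: "z \<in> D" "gr z < 0" "v = (Fr z - c) / (- gr z)" unfolding Z_def by blast
    show "(c - Fr y) / gr y \<le> v" unfolding z(3)
      by (rule one_constraint_key[OF cF cg feas]) (use FD that z in auto)
  qed auto
  have "ereal c \<le> F x + emult \<mu> (g x)" for x
  proof (cases "x \<in> D")
    case False
    then have "F x = \<infinity> \<or> g x = \<infinity>" unfolding D_def by auto
    then have "F x + emult \<mu> (g x) = \<infinity>"
      using mu0 Fm[of x] by (auto simp: emult_def)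
    then show ?thesis by (metis ereal_less_eq(1))
  next
    case True
    have em: "emult \<mu> (g x) = ereal (\<mu> * gr x)" using FD[OF True] by (simp add: emult_def)
    have "c \<le> Fr x + \<mu> * gr x"
    proof (cases "gr x" "0::real" rule: linorder_cases)
      case less
      have "\<mu> * (- gr x) \<le> Fr x - c" using mule[OF True less] less by (simp add: divide_simps mult.commute)
      then show ?thesis by (simp add: algebra_simps)
    next
      case equal
      then have "g x \<le> 0" using FD[OF True] by (simp add: zero_ereal_def)
      then show ?thesis using feas[of x] FD[OF True] equal by simp
    next
      case greater
      have "c - Fr x \<le> \<mu> * gr x" using muge[OF True greater] greater by (simp add: divide_simps mult.commute)
      then show ?thesis by simp
    qed
    then show ?thesis using FD[OF True] em by simp
  qed
  then show ?thesis using mu0 by blast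
qed



lemma cvxe_add:
  fixes f g :: "'a::real_vector \<Rightarrow> ereal"
  assumes "cvxe f" "cvxe g" "\<And>x. f x \<noteq> -\<infinity>" "\<And>x. g x \<noteq> -\<infinity>"
  shows "cvxe (\<lambda>x. f x + g x)"
  unfolding cvxe_def
proof (intro allI impI)
  fix x y :: 'a and t :: real assume t: "0 < t" "t < 1"
  let ?w = "t *\<^sub>R x + (1 - t) *\<^sub>R y"
  have "f ?w + g ?w \<le> (ereal t * f x + ereal (1 - t) * f y) + (ereal t * g x + ereal (1 - t) * g y)"
    using assms(1,2) t unfolding cvxe_def by (intro add_mono) auto
  also have "\<dots> = (ereal t * f x + ereal t * g x) + (ereal (1 - t) * f y + ereal (1 - t) * g y)"
    by (simp add: ac_simps)
  also have "\<dots> = ereal t * (f x + g x) + ereal (1 - t) * (f y + g y)"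
    using assms(3,4) by (simp add: ereal_distrib_left)
  finally show "f ?w + g ?w \<le> ereal t * (f x + g x) + ereal (1 - t) * (f y + g y)" .
qed

lemma emult_nonminf: "v \<noteq> -\<infinity> \<Longrightarrow> 0 \<le> l \<Longrightarrow> emult l v \<noteq> -\<infinity>"
  by (cases v) (auto simp: emult_def)

lemma emult_pinf: "0 \<le> l \<Longrightarrow> emult l \<infinity> = \<infinity>"
  by (auto simp: emult_def)

lemma cvxe_emult:
  fixes g :: "'a::real_vector \<Rightarrow> ereal"
  assumes "cvxe g" "\<And>x. g x \<noteq> -\<infinity>" "0 \<le> l"
  shows "cvxe (\<lambda>x. emult l (g x))"
proof (cases "l = 0")
  case True
  show ?thesis unfolding cvxe_def
  proof (intro allI impI)
    fix x y :: 'a and t :: real assume t: "0 < t" "t < 1"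
    let ?w = "t *\<^sub>R x + (1 - t) *\<^sub>R y"
    show "emult l (g ?w) \<le> ereal t * emult l (g x) + ereal (1 - t) * emult l (g y)"
    proof (cases "g x = \<infinity> \<or> g y = \<infinity>")
      case True
      then show ?thesis using t \<open>l = 0\<close> by (auto simp: emult_def)
    next
      case False
      then obtain a b where ab: "g x = ereal a" "g y = ereal b"
        using assms(2)[of x] assms(2)[of y] by (cases "g x"; cases "g y") auto
      have "g ?w \<le> ereal t * g x + ereal (1 - t) * g y" using assms(1) t unfolding cvxe_def by blast
      then have "g ?w \<noteq> \<infinity>" using ab by auto
      then show ?thesis using False \<open>l = 0\<close> by (simp add: emult_def)
    qed
  qed
next
  case False
  then have l: "l > 0" using assms(3) by simp
  show ?thesis unfolding cvxe_def
  proof (intro allI impI)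
    fix x y :: 'a and t :: real assume t: "0 < t" "t < 1"
    let ?w = "t *\<^sub>R x + (1 - t) *\<^sub>R y"
    have "ereal l * g ?w \<le> ereal l * (ereal t * g x + ereal (1 - t) * g y)"
      using assms(1) t l unfolding cvxe_def by (intro ereal_mult_left_mono) auto
    also have "\<dots> = ereal t * (ereal l * g x) + ereal (1 - t) * (ereal l * g y)"
      using assms(2)[of x] assms(2)[of y] t l
      by (subst ereal_distrib_left) (auto simp: ac_simps ereal_mult_eq_MInfty)
    finally show "emult l (g ?w) \<le> ereal t * emult l (g x) + ereal (1 - t) * emult l (g y)"
      using l by (simp add: emult_def)
  qed
qed

lemma sum_nonminf:
  fixes h :: "nat \<Rightarrow> ereal"
  shows "(\<And>i. i \<in> A \<Longrightarrow> h i \<noteq> -\<infinity>) \<Longrightarrow> sum h A \<noteq> -\<infinity>"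
  by (induction A rule: infinite_finite_induct) auto

lemma cvxe_sum:
  fixes g :: "nat \<Rightarrow> 'a::real_vector \<Rightarrow> ereal"
  assumes "\<And>i. i < n \<Longrightarrow> cvxe (g i)" "\<And>i x. i < n \<Longrightarrow> g i x \<noteq> -\<infinity>"
  shows "cvxe (\<lambda>x. \<Sum>i<n. g i x)"
  using assms
proof (induction n)
  case 0
  then show ?case by (simp add: cvxe_def)
next
  case (Suc n)
  have "cvxe (\<lambda>x. (\<Sum>i<n. g i x) + g n x)"
    by (rule cvxe_add) (use Suc in \<open>auto intro!: sum_nonminf\<close>)
  then show ?case by simp
qed

lemma cvxe_indic:
  fixes F g :: "'a::real_vector \<Rightarrow> ereal"
  assumes "cvxe F" "cvxe g" "\<And>x. F x \<noteq> -\<infinity>" "\<And>x. g x \<noteq> -\<infinity>"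
  shows "cvxe (\<lambda>x. if g x \<le> 0 then F x else \<infinity>)"
  unfolding cvxe_def
proof (intro allI impI)
  fix x y :: 'a and t :: real assume t: "0 < t" "t < 1"
  let ?w = "t *\<^sub>R x + (1 - t) *\<^sub>R y"
  let ?F = "\<lambda>x. if g x \<le> 0 then F x else \<infinity>"
  show "?F ?w \<le> ereal t * ?F x + ereal (1 - t) * ?F y"
  proof (cases "g x \<le> 0 \<and> g y \<le> 0")
    case True
    have "g ?w \<le> ereal t * g x + ereal (1 - t) * g y" using assms(2) t unfolding cvxe_def by blast
    also have "\<dots> \<le> 0" using True t
      by (intro add_nonpos_nonpos) (cases "g x"; cases "g y"; auto simp: mult_nonneg_nonpos)+
    finally have "g ?w \<le> 0" .
    then show ?thesis using True assms(1) t unfolding cvxe_def by auto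
  next
    case False
    then show ?thesis using t assms(3)[of x] assms(3)[of y] by auto
  qed
qed

lemma finite_constraints:
  fixes g :: "nat \<Rightarrow> 'a::real_vector \<Rightarrow> ereal"
  assumes cg: "\<And>i. i < n \<Longrightarrow> cvxe (g i)" and gm: "\<And>i x. i < n \<Longrightarrow> g i x \<noteq> -\<infinity>"
    and g0: "\<And>i. i < n \<Longrightarrow> g i x0 < 0"
  shows "\<And>F. cvxe F \<Longrightarrow> (\<And>x. F x \<noteq> -\<infinity>) \<Longrightarrow> F x0 \<noteq> \<infinity> \<Longrightarrow>
     (\<And>x. (\<forall>i<n. g i x \<le> 0) \<Longrightarrow> ereal c \<le> F x) \<Longrightarrow>
     \<exists>\<mu>. (\<forall>i. 0 \<le> \<mu> i) \<and> (\<forall>x. ereal c \<le> F x + (\<Sum>i<n. emult (\<mu> i) (g i x)))"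
  using cg gm g0
proof (induction n)
  case 0
  then show ?case by (intro exI[of _ "\<lambda>_. 0"]) auto
next
  case (Suc n F)
  define F' where "F' x = (if g n x \<le> 0 then F x else \<infinity>)" for x
  have cF': "cvxe F'" unfolding F'_def by (rule cvxe_indic) (use Suc in auto)
  have F'm: "F' x \<noteq> -\<infinity>" for x using Suc unfolding F'_def by auto
  have F'0: "F' x0 \<noteq> \<infinity>" using Suc.prems(3) Suc.prems(7)[of n] unfolding F'_def by auto
  have F'f: "ereal c \<le> F' x" if "\<forall>i<n. g i x \<le> 0" for x
    using that Suc.prems(4)[of x] unfolding F'_def by (auto simp: less_Suc_eq)
  obtain \<mu> where mu: "\<forall>i. 0 \<le> \<mu> i" "\<forall>x. ereal c \<le> F' x + (\<Sum>i<n. emult (\<mu> i) (g i x))"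
    using Suc.IH[OF cF' F'm F'0 F'f] Suc.prems(5-7) by auto
  have emn: "emult (\<mu> i) (g i x) \<noteq> -\<infinity>" if "i < n" for i x
    using Suc.prems(6)[of i x] mu(1) that by (intro emult_nonminf) auto
  define G where "G x = F x + (\<Sum>i<n. emult (\<mu> i) (g i x))" for x
  have Gm: "G x \<noteq> -\<infinity>" for x
  proof -
    have "(\<Sum>i<n. emult (\<mu> i) (g i x)) \<noteq> -\<infinity>"
    proof (rule sum_nonminf)
      fix i assume "i \<in> {..<n}"
      then show "emult (\<mu> i) (g i x) \<noteq> -\<infinity>" using Suc.prems(6)[of i x] mu(1) by (intro emult_nonminf) auto
    qed
    then show ?thesis unfolding G_def using Suc.prems(2)[of x] by simp
  qed
  have cG: "cvxe G" unfolding G_def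
  proof (rule cvxe_add)
    show "cvxe (\<lambda>x. \<Sum>i<n. emult (\<mu> i) (g i x))"
      by (rule cvxe_sum) (use Suc.prems mu(1) emn in \<open>auto intro!: cvxe_emult\<close>)
    show "(\<Sum>i<n. emult (\<mu> i) (g i x)) \<noteq> -\<infinity>" for x
      by (rule sum_nonminf) (use emn in auto)
  qed (use Suc.prems in auto)
  have G0: "G x0 \<noteq> \<infinity>"
  proof -
    have "emult (\<mu> i) (g i x0) \<noteq> \<infinity>" if "i < n" for i
      using Suc.prems(7)[of i] Suc.prems(6)[of i x0] mu(1) that by (auto simp: emult_def ereal_mult_eq_PInfty)
    then have "(\<Sum>i<n. emult (\<mu> i) (g i x0)) \<noteq> \<infinity>" by (simp add: sum_Pinfty)
    then show ?thesis unfolding G_def using Suc.prems(3) by simp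
  qed
  have Gf: "ereal c \<le> G x" if "g n x \<le> 0" for x
    using mu(2)[rule_format, of x] that unfolding G_def F'_def by simp
  obtain m where m: "m \<ge> 0" "\<forall>x. ereal c \<le> G x + emult m (g n x)"
    using one_constraint[OF cG Suc.prems(5)[of n] Gm Suc.prems(6)[of n] G0 Suc.prems(7)[of n] Gf] by auto
  show ?case
  proof (intro exI[of _ "\<mu>(n := m)"] conjI allI)
    show "0 \<le> (\<mu>(n := m)) i" for i using mu(1) m(1) by auto
    fix x
    have "(\<Sum>i<Suc n. emult ((\<mu>(n := m)) i) (g i x)) = (\<Sum>i<n. emult (\<mu> i) (g i x)) + emult m (g n x)"
      by simp
    then show "ereal c \<le> F x + (\<Sum>i<Suc n. emult ((\<mu>(n := m)) i) (g i x))"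
      using m(2)[rule_format, of x] unfolding G_def by (simp add: add.assoc)
  qed
qed




locale setting =
  fixes f :: "nat \<Rightarrow> 'a::banach \<Rightarrow> ereal" and xbar :: 'a
  assumes pc: "\<And>k. proper_convex (f k)"
    and C_ne: "edom (f 0) \<inter> {x. \<forall>k\<ge>1. f k x \<le> 0} \<noteq> {}"
    and sol: "solutionP f xbar"
    and slater: "\<exists>x\<in>edom (f 0). (SUP k\<in>{1..}. f k x) < 0"
begin

lemma cvf: "cvxe (f k)" using pc[of k] unfolding proper_convex_def cvxe_def by blast
lemma fm: "f k x \<noteq> -\<infinity>" using pc[of k] unfolding proper_convex_def by blast

lemma feas_xbar: "k \<ge> 1 \<Longrightarrow> f k xbar \<le> 0" using sol unfolding solutionP_def feasibleP_def by blast

definition c where "c = real_of_ereal (f 0 xbar)"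

lemma f0xbar: "f 0 xbar = ereal c"
proof -
  obtain y where y: "f 0 y \<noteq> \<infinity>" "\<forall>k\<ge>1. f k y \<le> 0" using C_ne unfolding edom_def by blast
  then have "f 0 xbar \<le> f 0 y" using sol unfolding solutionP_def feasibleP_def by blast
  then have "f 0 xbar \<noteq> \<infinity>" using y by auto
  then show ?thesis using fm[of 0 xbar] unfolding c_def by (cases "f 0 xbar") auto
qed

lemma feas_ge: "(\<And>k. k \<ge> 1 \<Longrightarrow> f k x \<le> 0) \<Longrightarrow> ereal c \<le> f 0 x"
  using sol f0xbar unfolding solutionP_def feasibleP_def by auto

definition h where "h N x = (SUP k\<in>{N<..}. f k x)"

lemma f_le_h: "N < k \<Longrightarrow> f k x \<le> h N x" unfolding h_def by (auto intro: SUP_upper)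

lemma hm: "h N x \<noteq> -\<infinity>"
  using f_le_h[of N "Suc N" x] fm[of "Suc N" x] by auto

lemma h_mono: "K \<le> N \<Longrightarrow> h N x \<le> h K x"
  unfolding h_def by (rule SUP_subset_mono) auto

lemma cvh: "cvxe (h N)"
  unfolding cvxe_def
proof (intro allI impI)
  fix x y :: 'a and t :: real assume t: "0 < t" "t < 1"
  show "h N (t *\<^sub>R x + (1 - t) *\<^sub>R y) \<le> ereal t * h N x + ereal (1 - t) * h N y"
    unfolding h_def
  proof (rule SUP_least)
    fix k assume k: "k \<in> {N<..}"
    have "f k (t *\<^sub>R x + (1 - t) *\<^sub>R y) \<le> ereal t * f k x + ereal (1 - t) * f k y"
      using cvf[of k] t unfolding cvxe_def by blast
    also have "\<dots> \<le> ereal t * h N x + ereal (1 - t) * h N y"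
      using t k by (intro add_mono ereal_mult_left_mono) (auto intro: f_le_h)
    finally show "f k (t *\<^sub>R x + (1 - t) *\<^sub>R y) \<le> ereal t * (SUP k\<in>{N<..}. f k x) + ereal (1 - t) * (SUP k\<in>{N<..}. f k y)"
      unfolding h_def .
  qed
qed

definition x0 where "x0 = (SOME x. x \<in> edom (f 0) \<and> (SUP k\<in>{1..}. f k x) < 0)"
definition s0 where "s0 = (SUP k\<in>{1..}. f k x0)"

lemma x0: "f 0 x0 \<noteq> \<infinity>" "s0 < 0"
proof -
  have "x0 \<in> edom (f 0) \<and> (SUP k\<in>{1..}. f k x0) < 0" unfolding x0_def
    by (rule someI_ex) (use slater in blast)
  then show "f 0 x0 \<noteq> \<infinity>" "s0 < 0" unfolding s0_def edom_def by auto
qed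

lemma fk_x0: "k \<ge> 1 \<Longrightarrow> f k x0 \<le> s0" unfolding s0_def by (auto intro: SUP_upper)

definition \<delta> where "\<delta> = - real_of_ereal s0"

lemma delta: "\<delta> > 0" "s0 = ereal (- \<delta>)"
proof -
  have "s0 \<noteq> -\<infinity>" using fk_x0[of 1] fm[of 1 x0] by auto
  then show "\<delta> > 0" "s0 = ereal (- \<delta>)" using x0(2) unfolding \<delta>_def by (cases s0; auto)+
qed

lemma h_x0: "h N x0 \<le> ereal (- \<delta>)"
  unfolding h_def using fk_x0 delta by (intro SUP_least) auto

lemma emult_nonpos: "0 \<le> l \<Longrightarrow> v \<le> 0 \<Longrightarrow> emult l v \<le> 0"
  by (cases v) (auto simp: emult_def mult_nonneg_nonpos)

lemma LagD_xbar: "admD mu mui \<Longrightarrow> LagD f mu mui xbar \<le> f 0 xbar"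
proof -
  assume a: "admD mu mui"
  have "(\<Sum>k\<in>{1..n}. emult (mu k) (f k xbar)) \<le> 0" for n
    using a feas_xbar by (intro sum_nonpos emult_nonpos) (auto simp: admD_def)
  then have A: "limsup (\<lambda>n. \<Sum>k\<in>{1..n}. emult (mu k) (f k xbar)) \<le> 0"
    by (intro Limsup_bounded) auto
  have "finf f xbar \<le> 0" unfolding finf_def
    using feas_xbar by (intro Limsup_bounded) (auto intro: eventually_sequentiallyI[of 1])
  then have E: "emult mui (finf f xbar) \<le> 0" using a by (intro emult_nonpos) (auto simp: admD_def)
  have "LagD f mu mui xbar \<le> f 0 xbar + 0 + 0" unfolding LagD_def
    by (intro add_mono A E order_refl)
  then show ?thesis by simp
qed

lemma dualD_le: "admD mu mui \<Longrightarrow> dualD f mu mui \<le> f 0 xbar"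
  unfolding dualD_def using LagD_xbar by (meson INF_lower UNIV_I order_trans)

lemma LagDm_xbar_eq: "LagDm f m mu xbar = f 0 xbar + (\<Sum>k\<in>{1..m}. emult (mu k) (f k xbar))"
proof -
  have "(if m < k then emult (mu k) (max (f k xbar) 0) else 0) = 0" for k
    using feas_xbar[of k] by (auto simp: emult_def max_def)
  then show ?thesis unfolding LagDm_def by simp
qed

lemma LagDm_xbar: "admDm mu \<Longrightarrow> LagDm f m mu xbar \<le> f 0 xbar"
proof -
  assume a: "admDm mu"
  have "(\<Sum>k\<in>{1..m}. emult (mu k) (f k xbar)) \<le> 0"
    using a feas_xbar by (intro sum_nonpos emult_nonpos) (auto simp: admDm_def)
  then show ?thesis unfolding LagDm_xbar_eq using add_left_mono by fastforce
qed

lemma dualDm_le: "admDm mu \<Longrightarrow> dualDm f m mu \<le> f 0 xbar"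
  unfolding dualDm_def using LagDm_xbar by (meson INF_lower UNIV_I order_trans)


lemma ereal_le_suminf: "(\<And>n. 0 \<le> u n) \<Longrightarrow> (u k :: ereal) \<le> suminf u"
proof -
  assume u: "\<And>n. 0 \<le> u n"
  have "u k \<le> (\<Sum>n<k. u n) + u k" by (rule add_increasing) (auto intro: sum_nonneg u)
  also have "\<dots> = (\<Sum>n<Suc k. u n)" by simp
  also have "\<dots> \<le> suminf u" by (rule suminf_upper) (rule u)
  finally show ?thesis .
qed

lemma existsDm: "\<exists>lam. admDm lam \<and> (\<forall>x. ereal c \<le> LagDm f m lam x)"
proof -
  define g where "g i = (if i < m then f (Suc i) else h m)" for i
  have cg: "cvxe (g i)" for i unfolding g_def using cvf cvh by auto
  have gm: "g i x \<noteq> -\<infinity>" for i x unfolding g_def using fm hm by auto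
  have g0: "g i x0 < 0" for i
  proof -
    have "g i x0 \<le> ereal (- \<delta>)" unfolding g_def using fk_x0[of "Suc i"] delta h_x0 by auto
    moreover have "ereal (- \<delta>) < 0" using delta by simp
    ultimately show ?thesis by (rule order_le_less_trans)
  qed
  have feas: "ereal c \<le> f 0 x" if "\<forall>i<Suc m. g i x \<le> 0" for x
  proof (rule feas_ge)
    fix k :: nat assume k: "k \<ge> 1"
    show "f k x \<le> 0"
    proof (cases "k \<le> m")
      case True
      then have "g (k - 1) x = f k x" using k unfolding g_def by auto
      moreover have "k - 1 < Suc m" using True by simp
      ultimately show ?thesis using that by metis
    next
      case False
      then have "f k x \<le> h m x" by (intro f_le_h) auto
      also have "h m x = g m x" unfolding g_def by simp
      also have "\<dots> \<le> 0" using that by auto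
      finally show ?thesis .
    qed
  qed
  obtain \<mu> where mu: "\<forall>i. 0 \<le> \<mu> i" "\<forall>x. ereal c \<le> f 0 x + (\<Sum>i<Suc m. emult (\<mu> i) (g i x))"
    using finite_constraints[of "Suc m" g x0 "f 0" c, OF cg gm g0 cvf fm x0(1) feas] by blast
  define L where "L = max (\<mu> m) 1"
  have L: "L > 0" "\<mu> m \<le> L" unfolding L_def by auto
  define lam where "lam k = (if k \<le> m then \<mu> (k - 1) else L)" for k
  have adm: "admDm lam" unfolding admDm_def
  proof (intro conjI exI allI impI)
    show "0 \<le> lam k" for k unfolding lam_def using mu(1) L by auto
    fix k :: nat
    have "\<mu> (k - 1) \<le> (\<Sum>i<Suc m. \<mu> i)" if "k \<le> m"
      using that mu(1) by (intro member_le_sum) auto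
    then show "lam k \<le> (\<Sum>i<Suc m. \<mu> i) + L" unfolding lam_def using L mu(1)
      by (auto intro: add_increasing add_increasing2 sum_nonneg)
  qed
  have "ereal c \<le> LagDm f m lam x" for x
  proof -
    define u where "u k = (if m < k then emult (lam k) (max (f k x) 0) else 0)" for k
    have u0: "0 \<le> u k" for k unfolding u_def lam_def using L
      by (auto simp: emult_def intro: ereal_0_le_mult)
    define Hp where "Hp = (SUP k\<in>{m<..}. max (f k x) 0)"
    have "ereal L * Hp = (SUP k\<in>{m<..}. ereal L * max (f k x) 0)"
      unfolding Hp_def using L by (intro SUP_ereal_mult_left[symmetric]) auto
    also have "\<dots> \<le> suminf u"
    proof (rule SUP_least)
      fix k assume k: "k \<in> {m<..}"
      have "ereal L * max (f k x) 0 = u k" unfolding u_def lam_def using k L by (auto simp: emult_def)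
      also have "\<dots> \<le> suminf u" by (rule ereal_le_suminf) (rule u0)
      finally show "ereal L * max (f k x) 0 \<le> suminf u" .
    qed
    finally have LHp: "ereal L * Hp \<le> suminf u" .
    have hHp: "h m x \<le> Hp" unfolding h_def Hp_def by (intro SUP_mono') auto
    have Hp0: "0 \<le> Hp" unfolding Hp_def by (rule order_trans[OF _ SUP_upper[of "Suc m"]]) auto
    have E: "emult (\<mu> m) (h m x) \<le> ereal L * Hp"
    proof (cases "h m x")
      case (real r)
      show ?thesis
      proof (cases "r \<le> 0")
        case True
        then have "emult (\<mu> m) (h m x) \<le> 0" using real mu(1) by (intro emult_nonpos) auto
        also have "0 \<le> ereal L * Hp" using Hp0 L by (intro ereal_0_le_mult) auto
        finally show ?thesis .
      next
        case False
        have "emult (\<mu> m) (h m x) = ereal (\<mu> m * r)" using real by (simp add: emult_def)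
        also have "\<dots> \<le> ereal (L * r)" using False L by (simp add: mult_right_mono)
        also have "\<dots> = ereal L * h m x" using real by simp
        also have "\<dots> \<le> ereal L * Hp" using hHp L by (intro ereal_mult_left_mono) auto
        finally show ?thesis .
      qed
    next
      case PInf
      then have "Hp = \<infinity>" using hHp by auto
      then show ?thesis using L by auto
    next
      case MInf
      then show ?thesis using hm by auto
    qed
    have A: "(\<Sum>k\<in>{1..m}. emult (lam k) (f k x)) = (\<Sum>i<m. emult (\<mu> i) (g i x))"
      unfolding One_nat_def sum.atLeast1_atMost_eq by (rule sum.cong) (auto simp: lam_def g_def)
    have "ereal c \<le> f 0 x + ((\<Sum>i<m. emult (\<mu> i) (g i x)) + emult (\<mu> m) (h m x))"
      using mu(2)[rule_format, of x] by (simp add: g_def)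
    also have "\<dots> \<le> f 0 x + ((\<Sum>i<m. emult (\<mu> i) (g i x)) + suminf u)"
      using E LHp by (intro add_left_mono) auto
    also have "\<dots> = LagDm f m lam x" unfolding LagDm_def A u_def by (simp add: add.assoc)
    finally show ?thesis .
  qed
  then show ?thesis using adm by blast
qed

definition G where "G N i = (if i < N then f (Suc i) else h N)"

lemma multN: "\<exists>\<mu>. (\<forall>i. 0 \<le> \<mu> i) \<and> (\<forall>x. ereal c \<le> f 0 x + (\<Sum>i<Suc N. emult (\<mu> i) (G N i x)))"
proof -
  have cg: "cvxe (G N i)" for i unfolding G_def using cvf cvh by auto
  have gm: "G N i x \<noteq> -\<infinity>" for i x unfolding G_def using fm hm by auto
  have g0: "G N i x0 < 0" for i
  proof -
    have "G N i x0 \<le> ereal (- \<delta>)" unfolding G_def using fk_x0[of "Suc i"] delta h_x0 by auto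
    moreover have "ereal (- \<delta>) < 0" using delta by simp
    ultimately show ?thesis by (rule order_le_less_trans)
  qed
  have feas: "ereal c \<le> f 0 x" if "\<forall>i<Suc N. G N i x \<le> 0" for x
  proof (rule feas_ge)
    fix k :: nat assume k: "k \<ge> 1"
    show "f k x \<le> 0"
    proof (cases "k \<le> N")
      case True
      then have "G N (k - 1) x = f k x" using k unfolding G_def by auto
      moreover have "k - 1 < Suc N" using True by simp
      ultimately show ?thesis using that by metis
    next
      case False
      then have "f k x \<le> h N x" by (intro f_le_h) auto
      also have "h N x = G N N x" unfolding G_def by simp
      also have "\<dots> \<le> 0" using that by auto
      finally show ?thesis .
    qed
  qed
  show ?thesis
    using finite_constraints[of "Suc N" "G N" x0 "f 0" c, OF cg gm g0 cvf fm x0(1) feas] by blast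
qed

lemma emult_ereal: "emult l (ereal r) = ereal (l * r)"
  by (simp add: emult_def)

lemma emult_le_real: "0 \<le> l \<Longrightarrow> v \<le> ereal r \<Longrightarrow> v \<noteq> -\<infinity> \<Longrightarrow> emult l v \<le> ereal (l * r)"
  by (cases v) (auto simp: emult_def mult_left_mono)

lemma SUP_finite_less:
  fixes u :: "nat \<Rightarrow> ereal"
  shows "finite A \<Longrightarrow> (\<forall>k\<in>A. u k < \<infinity>) \<Longrightarrow> (SUP k\<in>A. u k) < \<infinity>"
  by (induction A rule: finite_induct) (auto simp: bot_ereal_def max_def)

lemma finf_INF: "finf f x = (INF K. h K x)"
proof -
  define S where "S n = (SUP m\<in>{n..}. f m x)" for n
  have hS: "h K x = S (Suc K)" for K unfolding h_def S_def by (simp add: atLeast_Suc_greaterThan)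
  have Sdec: "S (Suc n) \<le> S n" for n unfolding S_def by (rule SUP_subset_mono) auto
  have "finf f x = (INF n. S n)" unfolding finf_def S_def by (rule limsup_INF_SUP)
  also have "\<dots> = (INF K. S (Suc K))"
  proof (rule antisym)
    show "(INF n. S n) \<le> (INF K. S (Suc K))" by (rule INF_greatest) (rule INF_lower, simp)
    show "(INF K. S (Suc K)) \<le> (INF n. S n)"
    proof (rule INF_greatest)
      fix n :: nat
      have "(INF K. S (Suc K)) \<le> S (Suc n)" by (rule INF_lower) simp
      also have "\<dots> \<le> S n" by (rule Sdec)
      finally show "(INF K. S (Suc K)) \<le> S n" .
    qed
  qed
  finally show ?thesis unfolding hS .
qed

lemma h_decseq: "decseq (\<lambda>K. h K x)"
  by (rule decseq_SucI) (rule h_mono, simp)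

lemma h_lim: "(\<lambda>K. h K x) \<longlonglongrightarrow> finf f x"
  unfolding finf_INF by (rule LIMSEQ_INF[OF h_decseq])

lemma h_all_inf: assumes "h 0 x = \<infinity>" "\<And>k. k \<ge> 1 \<Longrightarrow> f k x \<noteq> \<infinity>" shows "h K x = \<infinity>"
proof (rule ccontr)
  assume a: "h K x \<noteq> \<infinity>"
  have "{0::nat<..} = {1..K} \<union> {K<..}" by auto
  then have "h 0 x = sup (SUP k\<in>{1..K}. f k x) (h K x)" unfolding h_def by (simp add: SUP_union)
  moreover have "(SUP k\<in>{1..K}. f k x) < \<infinity>" using assms(2) by (intro SUP_finite_less) (auto simp: less_top)
  ultimately have "h 0 x < \<infinity>" using a by (auto simp: less_top max_def)
  then show False using assms(1) by simp
qed

lemma cpt: "compact {w::nat\<Rightarrow>real. \<forall>k. w k \<in> {0..M}}"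
proof -
  have e: "PiE UNIV (\<lambda>_. {0..M}) = {w::nat\<Rightarrow>real. \<forall>k. w k \<in> {0..M}}" by (auto simp: PiE_def Pi_def)
  have "compactin (product_topology (\<lambda>_. euclidean) UNIV) (PiE UNIV (\<lambda>_::nat. {0..M::real}))"
    by (simp add: compactin_PiE)
  then show ?thesis unfolding e euclidean_product_topology by simp
qed

lemma existsD: "\<exists>lam lami. admD lam lami \<and> (\<forall>x. ereal c \<le> LagD f lam lami x)"
proof -
  have "\<forall>N. \<exists>\<mu>. (\<forall>i. 0 \<le> \<mu> i) \<and> (\<forall>x. ereal c \<le> f 0 x + (\<Sum>i<Suc N. emult (\<mu> i) (G N i x)))"
    using multN by blast
  then obtain mu where mu0: "\<And>N i. 0 \<le> mu N i"
    and mu: "\<And>N x. ereal c \<le> f 0 x + (\<Sum>i<Suc N. emult (mu N i) (G N i x))"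
    by metis
  obtain a0 where a0: "f 0 x0 = ereal a0" using x0(1) fm[of 0 x0] by (cases "f 0 x0") auto
  define T where "T N = (\<Sum>i<Suc N. mu N i)" for N
  define M where "M = (a0 - c) / \<delta>"
  have TM: "T N \<le> M" for N
  proof -
    have le: "emult (mu N i) (G N i x0) \<le> ereal (mu N i * (- \<delta>))" for i
    proof (rule emult_le_real)
      show "G N i x0 \<le> ereal (- \<delta>)" unfolding G_def using fk_x0[of "Suc i"] delta h_x0 by auto
      show "G N i x0 \<noteq> -\<infinity>" unfolding G_def using fm hm by auto
    qed (rule mu0)
    have "ereal c \<le> ereal a0 + (\<Sum>i<Suc N. ereal (mu N i * (- \<delta>)))"
      using mu[where N=N and x=x0] unfolding a0 by (rule order_trans) (intro add_left_mono sum_mono le)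
    moreover have "(\<Sum>i<Suc N. mu N i * (- \<delta>)) = T N * (- \<delta>)"
      unfolding T_def by (rule sum_distrib_right[symmetric])
    ultimately have "c \<le> a0 - \<delta> * T N" by (simp add: algebra_simps)
    then show ?thesis unfolding M_def using delta by (simp add: field_simps)
  qed
  define w where "w N k = (if k = 0 then T N else if k \<le> N then mu N (k - 1) else 0)" for N k
  have muT: "mu N i \<le> T N" if "i < Suc N" for N i unfolding T_def using that mu0
    by (intro member_le_sum) auto
  have T0: "0 \<le> T N" for N unfolding T_def using mu0 by (intro sum_nonneg) auto
  have wS: "w N \<in> {w::nat\<Rightarrow>real. \<forall>k. w k \<in> {0..M}}" for N
  proof (safe)
    fix k :: nat
    have M0: "0 \<le> M" using T0[of N] TM[of N] by simp
    have "mu N (k - 1) \<le> M" if "k \<le> N"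
    proof -
      have "k - 1 < Suc N" using that by simp
      then show ?thesis using muT[of "k - 1" N] TM[of N] by linarith
    qed
    then show "w N k \<in> {0..M}" unfolding w_def using T0[of N] TM[of N] mu0[of N "k - 1"] M0 by auto
  qed
  have sc: "seq_compact {w::nat\<Rightarrow>real. \<forall>k. w k \<in> {0..M}}"
    using cpt compact_eq_seq_compact_metric by blast
  have wS': "\<forall>N. w N \<in> {w::nat\<Rightarrow>real. \<forall>k. w k \<in> {0..M}}" using wS by blast
  obtain l r where lS: "l \<in> {w::nat\<Rightarrow>real. \<forall>k. w k \<in> {0..M}}" and r: "strict_mono r"
    and lim: "(w \<circ> r) \<longlonglongrightarrow> l"
    by (rule seq_compactE[OF sc wS'])
  have conv: "(\<lambda>j. w (r j) k) \<longlonglongrightarrow> l k" for k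
  proof -
    have "isCont (\<lambda>v::nat\<Rightarrow>real. v k) l"
      using continuous_on_eq_continuous_at[of UNIV "\<lambda>v::nat\<Rightarrow>real. v k"]
        continuous_on_product_coordinates[of k] by auto
    from isCont_tendsto_compose[OF this lim] show ?thesis by simp
  qed
  have l0: "0 \<le> l k" for k using lS by auto
  have rge: "eventually (\<lambda>j. K \<le> r j) sequentially" for K
    using r by (intro eventually_sequentiallyI[of K]) (meson le_trans seq_suble)
  have wpart: "(\<Sum>i<K. w N (Suc i)) \<le> w N 0" for N K
  proof -
    have "(\<Sum>i<K. w N (Suc i)) = (\<Sum>i<K. if i < N then mu N i else 0)"
      by (intro sum.cong) (auto simp: w_def)
    also have "\<dots> = (\<Sum>i\<in>{..<K} \<inter> {..<N}. mu N i)"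
      by (subst sum.inter_restrict) auto
    also have "\<dots> \<le> (\<Sum>i<Suc N. mu N i)" using mu0 by (intro sum_mono2) auto
    finally show ?thesis unfolding w_def T_def by simp
  qed
  have lpart: "(\<Sum>i<K. l (Suc i)) \<le> l 0" for K
  proof (rule LIMSEQ_le)
    show "(\<lambda>j. \<Sum>i<K. w (r j) (Suc i)) \<longlonglongrightarrow> (\<Sum>i<K. l (Suc i))" by (intro tendsto_sum conv)
    show "(\<lambda>j. w (r j) 0) \<longlonglongrightarrow> l 0" by (rule conv)
  qed (use wpart in auto)
  define lam where "lam k = (if k = 0 then 0 else l k)" for k
  have lam0: "0 \<le> lam k" for k unfolding lam_def using l0 by auto
  have lamS: "(\<Sum>k<Suc K. lam k) = (\<Sum>i<K. l (Suc i))" for K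
    unfolding sum.lessThan_Suc_shift by (simp add: lam_def)
  have lamb: "(\<Sum>k<n. lam k) \<le> l 0" for n
  proof -
    have "(\<Sum>k<n. lam k) \<le> (\<Sum>k<Suc n. lam k)" using lam0 by (intro sum_mono2) auto
    then show ?thesis using lamS[of n] lpart[of n] by simp
  qed
  have summ: "summable lam" by (rule summableI_nonneg_bounded[OF lam0 lamb])
  define lami where "lami = l 0 - suminf lam"
  have lami0: "0 \<le> lami" unfolding lami_def using suminf_le_const[OF summ lamb] by simp
  have adm: "admD lam lami" unfolding admD_def using lam0 summ lami0 by auto
  define tail where "tail K = suminf lam - (\<Sum>i<K. l (Suc i))" for K
  have tail0: "0 \<le> tail K" for K
    unfolding tail_def lamS[symmetric] using sum_le_suminf[OF summ, of "{..<Suc K}"] lam0 by auto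
  have tail_lim: "tail \<longlonglongrightarrow> 0"
  proof -
    have "(\<lambda>K. \<Sum>k<Suc K. lam k) \<longlonglongrightarrow> suminf lam"
      using summable_LIMSEQ[OF summ] by (rule LIMSEQ_Suc)
    then have "(\<lambda>K. suminf lam - (\<Sum>k<Suc K. lam k)) \<longlonglongrightarrow> suminf lam - suminf lam"
      by (intro tendsto_diff tendsto_const)
    then show ?thesis unfolding tail_def lamS by simp
  qed
  have main: "ereal c \<le> LagD f lam lami x" for x
  proof (cases "f 0 x = \<infinity> \<or> (\<exists>k\<ge>1. f k x = \<infinity>) \<or> h 0 x = \<infinity>")
    case True
    show ?thesis
    proof -
      consider "f 0 x = \<infinity>" | "\<exists>k\<ge>1. f k x = \<infinity>" | "(\<forall>k\<ge>1. f k x \<noteq> \<infinity>) \<and> h 0 x = \<infinity>"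
        using True by blast
      then have "LagD f lam lami x = \<infinity>"
      proof cases
        case 1 then show ?thesis unfolding LagD_def by simp
      next
        case 2
        then obtain k where k: "k \<ge> 1" "f k x = \<infinity>" by blast
        have "eventually (\<lambda>n. (\<Sum>j\<in>{1..n}. emult (lam j) (f j x)) = \<infinity>) sequentially"
        proof (rule eventually_sequentiallyI[of k])
          fix n assume "k \<le> n"
          then show "(\<Sum>j\<in>{1..n}. emult (lam j) (f j x)) = \<infinity>"
            using k lam0[of k] by (subst sum_Pinfty) (auto intro!: bexI[of _ k] simp: emult_pinf)
        qed
        then have "limsup (\<lambda>n. \<Sum>j\<in>{1..n}. emult (lam j) (f j x)) = limsup (\<lambda>n. \<infinity>)"
          by (rule Limsup_eq)
        then have "limsup (\<lambda>n. \<Sum>j\<in>{1..n}. emult (lam j) (f j x)) = \<infinity>" by (simp add: Limsup_const)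
        then show ?thesis unfolding LagD_def using fm[of 0 x] by simp
      next
        case 3
        then have "h K x = \<infinity>" for K using h_all_inf by blast
        then have "finf f x = \<infinity>" unfolding finf_INF by simp
        then have "emult lami (finf f x) = \<infinity>" using lami0 by (simp add: emult_pinf)
        then show ?thesis unfolding LagD_def by simp
      qed
      then show ?thesis by simp
    qed
  next
    case False
    then have fin0: "f 0 x \<noteq> \<infinity>" and fink: "\<And>k. k \<ge> 1 \<Longrightarrow> f k x \<noteq> \<infinity>" and finh: "h 0 x \<noteq> \<infinity>"
      by auto
    define fr where "fr k = real_of_ereal (f k x)" for k
    define hr where "hr K = real_of_ereal (h K x)" for K
    have fre: "f k x = ereal (fr k)" if "k = 0 \<or> k \<ge> 1" for k
      using that fin0 fink fm[of k x] unfolding fr_def by (cases "f k x") auto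
    have hfin: "h K x \<noteq> \<infinity>" for K using h_mono[of 0 K x] finh by auto
    have hre: "h K x = ereal (hr K)" for K
      using hfin[of K] hm[of K x] unfolding hr_def by (cases "h K x") auto
    have fh: "fr k \<le> hr K" if "K < k" for k K using f_le_h[OF that, of x] fre[of k] hre[of K] that by simp
    have hh: "hr N \<le> hr K" if "K \<le> N" for N K using h_mono[OF that, of x] hre by simp
    define Gr where "Gr N i = (if i < N then fr (Suc i) else hr N)" for N i
    have Gre: "G N i x = ereal (Gr N i)" for N i unfolding G_def Gr_def using fre hre by auto
    have ineqN: "c \<le> fr 0 + (\<Sum>i<Suc N. mu N i * Gr N i)" for N
      using mu[where N=N and x=x] unfolding Gre emult_ereal sum_ereal fre[of 0, simplified] by simp
    have KI: "c \<le> fr 0 + (\<Sum>i<K. w N (Suc i) * fr (Suc i)) + (w N 0 - (\<Sum>i<K. w N (Suc i))) * hr K"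
      if KN: "K \<le> N" for K N
    proof -
      have split: "{..<Suc N} = {..<K} \<union> {K..<Suc N}" using KN by auto
      have disj: "{..<K} \<inter> {K..<Suc N} = {}" by auto
      have s1: "(\<Sum>i<K. mu N i * Gr N i) = (\<Sum>i<K. w N (Suc i) * fr (Suc i))"
        using KN by (intro sum.cong) (auto simp: Gr_def w_def)
      have s1': "(\<Sum>i<K. mu N i) = (\<Sum>i<K. w N (Suc i))"
        using KN by (intro sum.cong) (auto simp: w_def)
      have s2: "(\<Sum>i\<in>{K..<Suc N}. mu N i * Gr N i) \<le> (\<Sum>i\<in>{K..<Suc N}. mu N i * hr K)"
      proof (rule sum_mono)
        fix i assume i: "i \<in> {K..<Suc N}"
        have "Gr N i \<le> hr K" using i fh[of K "Suc i"] hh[OF KN] by (auto simp: Gr_def)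
        then show "mu N i * Gr N i \<le> mu N i * hr K" using mu0 by (simp add: mult_left_mono)
      qed
      have s3: "(\<Sum>i\<in>{K..<Suc N}. mu N i) = T N - (\<Sum>i<K. mu N i)"
        unfolding T_def split using disj by (simp add: sum.union_disjoint)
      have "c \<le> fr 0 + (\<Sum>i<Suc N. mu N i * Gr N i)" by (rule ineqN)
      also have "(\<Sum>i<Suc N. mu N i * Gr N i) = (\<Sum>i<K. mu N i * Gr N i) + (\<Sum>i\<in>{K..<Suc N}. mu N i * Gr N i)"
        unfolding split using disj by (simp add: sum.union_disjoint)
      also have "\<dots> \<le> (\<Sum>i<K. mu N i * Gr N i) + (\<Sum>i\<in>{K..<Suc N}. mu N i) * hr K"
      proof -
        have "(\<Sum>i\<in>{K..<Suc N}. mu N i * hr K) = (\<Sum>i\<in>{K..<Suc N}. mu N i) * hr K"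
          by (rule sum_distrib_right[symmetric])
        then show ?thesis using s2 by linarith
      qed
      finally show ?thesis unfolding s1 s3 s1' by (simp add: w_def add.assoc)
    qed
    have KL: "c \<le> fr 0 + (\<Sum>i<K. l (Suc i) * fr (Suc i)) + (l 0 - (\<Sum>i<K. l (Suc i))) * hr K" for K
    proof (rule LIMSEQ_le_const)
      show "(\<lambda>j. fr 0 + (\<Sum>i<K. w (r j) (Suc i) * fr (Suc i)) + (w (r j) 0 - (\<Sum>i<K. w (r j) (Suc i))) * hr K)
          \<longlonglongrightarrow> fr 0 + (\<Sum>i<K. l (Suc i) * fr (Suc i)) + (l 0 - (\<Sum>i<K. l (Suc i))) * hr K"
        by (intro tendsto_intros conv)
      show "\<exists>N. \<forall>j\<ge>N. c \<le> fr 0 + (\<Sum>i<K. w (r j) (Suc i) * fr (Suc i)) + (w (r j) 0 - (\<Sum>i<K. w (r j) (Suc i))) * hr K"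
        using rge[of K] KI unfolding eventually_sequentially by blast
    qed
    define P where "P K = (\<Sum>k\<in>{1..K}. lam k * fr k)" for K
    have Pe: "P K = (\<Sum>i<K. l (Suc i) * fr (Suc i))" for K
      unfolding P_def One_nat_def sum.atLeast1_atMost_eq by (simp add: lam_def)
    have partial: "(\<Sum>k\<in>{1..K}. emult (lam k) (f k x)) = ereal (P K)" for K
      unfolding P_def using fre by (simp add: emult_ereal)
    define B where "B = max (hr 0) 0"
    have hB: "hr K \<le> B" for K using hh[of 0 K] unfolding B_def by simp
    have low: "c - fr 0 - tail K * B \<le> P K + lami * hr K" for K
    proof -
      have "l 0 - (\<Sum>i<K. l (Suc i)) = lami + tail K" unfolding lami_def tail_def by simp
      then have "c \<le> fr 0 + P K + (lami + tail K) * hr K" using KL[of K] unfolding Pe by simp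
      moreover have "tail K * hr K \<le> tail K * B" using tail0 hB by (simp add: mult_left_mono)
      ultimately show ?thesis by (simp add: algebra_simps)
    qed
    have "(\<lambda>K. c - fr 0 - tail K * B) \<longlonglongrightarrow> c - fr 0 - 0 * B"
      by (intro tendsto_intros tail_lim)
    then have lim1: "(\<lambda>K. ereal (c - fr 0 - tail K * B)) \<longlonglongrightarrow> ereal (c - fr 0)" by simp
    have "ereal (c - fr 0) = limsup (\<lambda>K. ereal (c - fr 0 - tail K * B))"
      using lim_imp_Limsup[OF trivial_limit_sequentially lim1] by simp
    also have "\<dots> \<le> limsup (\<lambda>K. ereal (P K) + ereal (lami * hr K))"
      using low by (intro Limsup_mono) auto
    also have "\<dots> \<le> limsup (\<lambda>K. ereal (P K)) + limsup (\<lambda>K. ereal (lami * hr K))"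
      by (rule ereal_limsup_add_mono)
    also have "limsup (\<lambda>K. ereal (lami * hr K)) = emult lami (finf f x)"
    proof (cases "lami = 0")
      case True
      have "finf f x \<le> h 0 x" unfolding finf_INF by (rule INF_lower) simp
      then have "finf f x \<noteq> \<infinity>" using hfin[of 0] by (cases "finf f x") auto
      then show ?thesis using True by (simp add: emult_def Limsup_const zero_ereal_def[symmetric])
    next
      case False
      have "(\<lambda>K. ereal lami * h K x) \<longlonglongrightarrow> ereal lami * finf f x"
        by (intro tendsto_cmult_ereal h_lim) auto
      then have "(\<lambda>K. ereal (lami * hr K)) \<longlonglongrightarrow> ereal lami * finf f x" unfolding hre by simp
      from lim_imp_Limsup[OF trivial_limit_sequentially this]
      show ?thesis using False by (simp add: emult_def)
    qed
    finally have key: "ereal (c - fr 0) \<le> limsup (\<lambda>K. ereal (P K)) + emult lami (finf f x)" .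
    have "ereal c = ereal (fr 0) + ereal (c - fr 0)" by simp
    also have "\<dots> \<le> ereal (fr 0) + (limsup (\<lambda>K. ereal (P K)) + emult lami (finf f x))"
      using key by (rule add_left_mono)
    also have "\<dots> = LagD f lam lami x"
      unfolding LagD_def partial fre[of 0, simplified] by (simp add: add.assoc)
    finally show ?thesis .
  qed
  show ?thesis using adm main by blast
qed

lemma slackD:
  assumes a: "admD lam lami" and eq: "LagD f lam lami xbar = f 0 xbar"
  shows "(\<forall>k\<ge>1. emult (lam k) (f k xbar) = 0) \<and> emult lami (finf f xbar) = 0"
proof -
  define t where "t k = emult (lam k) (f k xbar)" for k
  define S where "S n = (\<Sum>k\<in>{1..n}. t k)" for n
  have t0: "k \<ge> 1 \<Longrightarrow> t k \<le> 0" for k unfolding t_def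
    using a feas_xbar by (intro emult_nonpos) (auto simp: admD_def)
  have S0: "S n \<le> 0" for n unfolding S_def using t0 by (intro sum_nonpos) auto
  then have A: "limsup S \<le> 0" by (intro Limsup_bounded) auto
  have "finf f xbar \<le> 0" unfolding finf_def
    using feas_xbar by (intro Limsup_bounded) (auto intro: eventually_sequentiallyI[of 1])
  then have E: "emult lami (finf f xbar) \<le> 0" using a by (intro emult_nonpos) (auto simp: admD_def)
  have eq2: "ereal c + limsup S + emult lami (finf f xbar) = ereal c"
    using eq unfolding LagD_def S_def t_def f0xbar .
  have "limsup S \<noteq> -\<infinity>"
  proof
    assume "limsup S = -\<infinity>"
    then have "ereal c + limsup S + emult lami (finf f xbar) = -\<infinity>" using E by auto
    then show False using eq2 by simp
  qed
  moreover have "emult lami (finf f xbar) \<noteq> -\<infinity>"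
  proof
    assume "emult lami (finf f xbar) = -\<infinity>"
    then have "ereal c + limsup S + emult lami (finf f xbar) = -\<infinity>" using A by auto
    then show False using eq2 by simp
  qed
  ultimately obtain a e where ae: "limsup S = ereal a" "emult lami (finf f xbar) = ereal e"
    using A E by (cases "limsup S"; cases "emult lami (finf f xbar)") auto
  have ae0: "a = 0" "e = 0" using eq2 A E unfolding ae by auto
  have Ssuc: "S (Suc n) = S n + t (Suc n)" for n unfolding S_def by simp
  have dec: "decseq S"
  proof (rule decseq_SucI)
    fix n
    have "S n + t (Suc n) \<le> S n + 0" using t0[of "Suc n"] by (intro add_mono) auto
    then show "S (Suc n) \<le> S n" unfolding Ssuc by simp
  qed
  have "limsup S = (INF n. S n)"
    by (rule lim_imp_Limsup[OF trivial_limit_sequentially LIMSEQ_INF[OF dec]])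
  then have "(INF n. S n) = 0" using ae(1) ae0(1) by (metis zero_ereal_def)
  then have "0 \<le> S n" for n by (metis INF_lower UNIV_I)
  then have Sz: "S n = 0" for n using S0 by (meson order.antisym)
  have "t k = 0" if k1: "k \<ge> 1" for k
  proof -
    obtain j where "k = Suc j" using k1 by (cases k) auto
    then show ?thesis using Ssuc[of j] Sz[of j] Sz[of "Suc j"] by simp
  qed
  then show ?thesis using ae ae0 unfolding t_def by simp
qed

lemma slackDm:
  assumes a: "admDm lam" and eq: "LagDm f m lam xbar = f 0 xbar"
  shows "\<forall>k\<in>{1..m}. emult (lam k) (f k xbar) = 0"
proof
  fix k assume k: "k \<in> {1..m}"
  define t where "t k = emult (lam k) (f k xbar)" for k
  define A where "A = (\<Sum>k\<in>{1..m}. t k)"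
  have t0: "k \<ge> 1 \<Longrightarrow> t k \<le> 0" for k unfolding t_def
    using a feas_xbar by (intro emult_nonpos) (auto simp: admDm_def)
  have eq2: "ereal c + A = ereal c" using eq unfolding LagDm_xbar_eq f0xbar A_def t_def .
  have "A \<noteq> -\<infinity>" using eq2 by auto
  moreover have "A \<le> 0" unfolding A_def using t0 by (intro sum_nonpos) auto
  ultimately obtain a where "A = ereal a" by (cases A) auto
  then have A0: "A = 0" using eq2 by simp
  have "A = t k + (\<Sum>j\<in>{1..m} - {k}. t j)" unfolding A_def using k by (simp add: sum.remove)
  also have "\<dots> \<le> t k + 0" using t0 by (intro add_mono sum_nonpos) auto
  finally have "0 \<le> t k" using A0 by simp
  then show "emult (lam k) (f k xbar) = 0" using t0[of k] k unfolding t_def by auto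
qed

end

theorem corollary3p5:
  fixes f :: "nat \<Rightarrow> 'a::banach \<Rightarrow> ereal" and xbar :: 'a
  assumes pc: "\<And>k. proper_convex (f k)"
    and C_ne: "edom (f 0) \<inter> {x. \<forall>k\<ge>1. f k x \<le> 0} \<noteq> {}"
    and sol: "solutionP f xbar"
    and slater: "\<exists>x\<in>edom (f 0). (SUP k\<in>{1..}. f k x) < 0"
  shows "((\<exists>lam lami. solutionD f lam lami \<and> f 0 xbar = dualD f lam lami) \<and>
          (\<forall>lam lami. solutionD f lam lami \<longrightarrow>
             dualD f lam lami = LagD f lam lami xbar \<and>
             (\<forall>k\<ge>1. emult (lam k) (f k xbar) = 0) \<and>
             emult lami (finf f xbar) = 0))
       \<and> (\<forall>m::nat.
          (\<exists>lam. solutionDm f m lam \<and> f 0 xbar = dualDm f m lam) \<and>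
          (\<forall>lam. solutionDm f m lam \<longrightarrow>
             dualDm f m lam = LagDm f m lam xbar \<and>
             (\<forall>k\<in>{1..m}. emult (lam k) (f k xbar) = 0)))"
proof -
  interpret S: setting f xbar using assms by unfold_locales auto
  obtain lam0 lami0 where l0: "admD lam0 lami0" "\<forall>x. ereal S.c \<le> LagD f lam0 lami0 x"
    using S.existsD by blast
  have d0: "dualD f lam0 lami0 = f 0 xbar"
    using S.dualD_le[OF l0(1)] l0(2) unfolding dualD_def S.f0xbar
    by (metis INF_greatest antisym)
  have sol0: "solutionD f lam0 lami0" unfolding solutionD_def using l0(1) d0 S.dualD_le by auto
  have P1: "dualD f lam lami = LagD f lam lami xbar \<and>
             (\<forall>k\<ge>1. emult (lam k) (f k xbar) = 0) \<and> emult lami (finf f xbar) = 0"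
    if "solutionD f lam lami" for lam lami
  proof -
    have adm: "admD lam lami" using that unfolding solutionD_def by blast
    have "f 0 xbar \<le> dualD f lam lami" using that l0(1) d0 unfolding solutionD_def by metis
    moreover have "dualD f lam lami \<le> LagD f lam lami xbar" unfolding dualD_def by (rule INF_lower) auto
    moreover note S.LagD_xbar[OF adm]
    ultimately have "dualD f lam lami = LagD f lam lami xbar" "LagD f lam lami xbar = f 0 xbar" by auto
    then show ?thesis using S.slackD[OF adm] by auto
  qed
  have P2: "(\<exists>lam. solutionDm f m lam \<and> f 0 xbar = dualDm f m lam) \<and>
          (\<forall>lam. solutionDm f m lam \<longrightarrow>
             dualDm f m lam = LagDm f m lam xbar \<and>
             (\<forall>k\<in>{1..m}. emult (lam k) (f k xbar) = 0))" for m
  proof -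
    obtain lam0 where l0: "admDm lam0" "\<forall>x. ereal S.c \<le> LagDm f m lam0 x"
      using S.existsDm by blast
    have d0: "dualDm f m lam0 = f 0 xbar"
      using S.dualDm_le[OF l0(1)] l0(2) unfolding dualDm_def S.f0xbar
      by (metis INF_greatest antisym)
    have sol0: "solutionDm f m lam0" unfolding solutionDm_def using l0(1) d0 S.dualDm_le by auto
    have "dualDm f m lam = LagDm f m lam xbar \<and> (\<forall>k\<in>{1..m}. emult (lam k) (f k xbar) = 0)"
      if "solutionDm f m lam" for lam
    proof -
      have adm: "admDm lam" using that unfolding solutionDm_def by blast
      have "f 0 xbar \<le> dualDm f m lam" using that l0(1) d0 unfolding solutionDm_def by metis
      moreover have "dualDm f m lam \<le> LagDm f m lam xbar" unfolding dualDm_def by (rule INF_lower) auto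
      moreover note S.LagDm_xbar[OF adm, of m]
      ultimately have "dualDm f m lam = LagDm f m lam xbar" "LagDm f m lam xbar = f 0 xbar" by auto
      then show ?thesis using S.slackDm[OF adm] by auto
    qed
    then show ?thesis using sol0 d0 by auto
  qed
  show ?thesis using sol0 d0 P1 P2 by metis
qed

end
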